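(* Assume $u_i=1$ for all $i$, $q_1\ge\dots\ge q_n$, and no pool size bound ($G=n$). Suppose var-Greedy returns a regime whose tests together consist exactly of individuals $\{1,\dots,n'\}$. Then there exists a non-overlapping regime maximizing welfare over $\tilde{\mathcal T}^B$ whose tests together consist exactly of individuals $\{1,\dots,n''\}$ for some $n''\le n'$.
   Context: Individual $i\in[n]$ is healthy with probability $q_i\in[0,1]$, independently. For $S\subseteq[n]$, $q_S=\prod_{i\in S}q_i$ ($q_\emptyset=1$). A test is a set $t\subseteq[n]$; with unit utilities $u(t)=q_t|t|$. $\tilde{\mathcal T}^B$ is the set of tuples of $B$ pairwise disjoint tests, with welfare $u(T)=\sum_ju(t_j)$. var-Greedy: for $j=1,\dots,B$, start with $t_j=\emptyset$ and repeatedly consider the smallest-index individual $i$ not yet placed in any test; add $i$ to $t_j$ if $u(t_j\cup\{i\})\ge u(t_j)$ (equivalently $q_i\ge |t_j|/(|t_j|+1)$), otherwise close $t_j$ and move to test $j+1$ (also stop if no individuals remain). *)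

theory Defs
  imports Complex_Main
begin

text \<open>Individuals are 1..n; q i is the probability that individual i is healthy.
  Unit utilities: u(t) = q_t * |t| with q_t the product over t (empty product 1).\<close>

definition test_util :: "(nat \<Rightarrow> real) \<Rightarrow> nat set \<Rightarrow> real" where
  "test_util q t = (\<Prod>i\<in>t. q i) * real (card t)"

text \<open>Non-overlapping regimes of B tests over individuals 1..n (tests indexed j < B;
  unused indices are fixed to the empty set to make the representation canonical).\<close>

definition regime :: "nat \<Rightarrow> nat \<Rightarrow> (nat \<Rightarrow> nat set) \<Rightarrow> bool" where
  "regime n B T \<longleftrightarrow> (\<forall>j<B. T j \<subseteq> {1..n}) \<and> (\<forall>j\<ge>B. T j = {})
     \<and> (\<forall>j<B. \<forall>k<B. j \<noteq> k \<longrightarrow> T j \<inter> T k = {})"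

definition welfare :: "(nat \<Rightarrow> real) \<Rightarrow> nat \<Rightarrow> (nat \<Rightarrow> nat set) \<Rightarrow> real" where
  "welfare q B T = (\<Sum>j<B. test_util q (T j))"

function grow :: "(nat \<Rightarrow> real) \<Rightarrow> nat \<Rightarrow> nat \<Rightarrow> nat set \<Rightarrow> nat set \<times> nat" where
  "grow q n i t =
     (if i \<le> n \<and> test_util q (insert i t) \<ge> test_util q t
      then grow q n (Suc i) (insert i t) else (t, i))"
  by pat_completeness auto
termination by (relation "measure (\<lambda>(q, n, i, t). Suc n - i)") auto

fun greedy_list :: "(nat \<Rightarrow> real) \<Rightarrow> nat \<Rightarrow> nat \<Rightarrow> nat \<Rightarrow> nat set list" where
  "greedy_list q n i 0 = []"
| "greedy_list q n i (Suc b) = (let (t, i') = grow q n i {} in t # greedy_list q n i' b)"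

definition var_greedy :: "(nat \<Rightarrow> real) \<Rightarrow> nat \<Rightarrow> nat \<Rightarrow> (nat \<Rightarrow> nat set)" where
  "var_greedy q n B = (\<lambda>j. if j < B then greedy_list q n 1 B ! j else {})"

end

theory Submission
  imports Defs
begin

declare grow.simps[simp del]

lemma grow_prop:
  assumes "grow q n i t = (t', e)"
  shows "t' = t \<union> {i..<e} \<and> i \<le> e \<and> (e \<le> n \<longrightarrow> test_util q (insert e t') < test_util q t')"
  using assms
proof (induction q n i t arbitrary: t' e rule: grow.induct)
  case (1 q n i t)
  show ?case
  proof (cases "i \<le> n \<and> test_util q (insert i t) \<ge> test_util q t")
    case True
    then have "grow q n (Suc i) (insert i t) = (t', e)" using 1(2)
      by (subst (asm) grow.simps) simp
    from 1(1)[OF True this] have "t' = insert i t \<union> {Suc i..<e} \<and> Suc i \<le> e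
        \<and> (e \<le> n \<longrightarrow> test_util q (insert e t') < test_util q t')" .
    then show ?thesis by auto
  next
    case False
    have "grow q n i t = (t, i)" by (subst grow.simps, rule if_not_P[OF False])
    then have "t' = t" "e = i" using 1(2) by simp_all
    then show ?thesis using False by auto
  qed
qed

fun gpos :: "(nat \<Rightarrow> real) \<Rightarrow> nat \<Rightarrow> nat \<Rightarrow> nat" where
  "gpos q n 0 = 1"
| "gpos q n (Suc l) = snd (grow q n (gpos q n l) {})"

lemma greedy_nth:
  "j < b \<Longrightarrow> greedy_list q n (gpos q n l) b ! j = fst (grow q n (gpos q n (l + j)) {})"
proof (induction b arbitrary: l j)
  case 0 then show ?case by simp
next
  case (Suc b)
  obtain t i' where g: "grow q n (gpos q n l) {} = (t, i')" by fastforce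
  show ?case
  proof (cases j)
    case 0 then show ?thesis using g by simp
  next
    case (Suc j')
    then have "j' < b" using Suc.prems by simp
    from Suc.IH[OF this, of "Suc l"] show ?thesis using g Suc by simp
  qed
qed

lemma gpos_block: "fst (grow q n (gpos q n l) {}) = {gpos q n l..<gpos q n (Suc l)}
   \<and> gpos q n l \<le> gpos q n (Suc l)
   \<and> (gpos q n (Suc l) \<le> n \<longrightarrow> test_util q (insert (gpos q n (Suc l)) {gpos q n l..<gpos q n (Suc l)})
        < test_util q {gpos q n l..<gpos q n (Suc l)})"
proof -
  obtain t e where g: "grow q n (gpos q n l) {} = (t, e)" by fastforce
  have e: "gpos q n (Suc l) = e" using g by simp
  have gp: "t = {} \<union> {gpos q n l..<e} \<and> gpos q n l \<le> e \<and> (e \<le> n \<longrightarrow> test_util q (insert e t) < test_util q t)"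
    using grow_prop[OF g] .
  have t: "t = {gpos q n l..<e}" using gp by simp
  have rest: "gpos q n l \<le> e \<and> (e \<le> n \<longrightarrow> test_util q (insert e {gpos q n l..<e}) < test_util q {gpos q n l..<e})"
    using gp unfolding t by blast
  show ?thesis unfolding e g fst_conv t using rest by blast
qed

lemma vg_eq: "j < B \<Longrightarrow> var_greedy q n B j = {gpos q n j..<gpos q n (Suc j)}"
  using greedy_nth[of j B q n 0] gpos_block[of q n j] by (simp add: var_greedy_def)

lemma union_blocks:
  fixes p :: "nat \<Rightarrow> nat"
  assumes "\<And>l. p l \<le> p (Suc l)"
  shows "(\<Union>j<B. {p j..<p (Suc j)}) = {p 0..<p (B::nat)}"
proof (induction B)
  case 0 then show ?case by (simp add: atLeastLessThan_empty)
next
  case (Suc B)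
  have "p 0 \<le> p B" using lift_Suc_mono_le[of p, OF assms] by simp
  have "(\<Union>j<Suc B. {p j..<p (Suc j)}) = (\<Union>j<B. {p j..<p (Suc j)}) \<union> {p B..<p (Suc B)}"
    by (simp add: lessThan_Suc Un_commute)
  also have "\<dots> = {p 0..<p B} \<union> {p B..<p (Suc B)}" using Suc.IH by simp
  also have "\<dots> = {p 0..<p (Suc B)}" using ivl_disj_un_two(3)[OF \<open>p 0 \<le> p B\<close> assms[of B]] .
  finally show ?case .
qed


lemma count_lemma:
  fixes q :: "nat \<Rightarrow> real" and p :: "nat \<Rightarrow> nat"
  assumes mono: "\<And>i j. i \<in> {1..n} \<Longrightarrow> j \<in> {1..n} \<Longrightarrow> i \<le> j \<Longrightarrow> q j \<le> q i"
   and p0: "p 0 = 1"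
   and step: "\<And>l. l < L \<Longrightarrow> p l \<le> p (Suc l) \<and> p (Suc l) \<le> n \<and>
        q (p (Suc l)) * (real (p (Suc l) - p l) + 1) < real (p (Suc l) - p l)"
  shows "l \<le> L \<Longrightarrow> finite J \<Longrightarrow> card J \<le> l \<Longrightarrow> (\<forall>j\<in>J. T j \<subseteq> {1..n})
     \<Longrightarrow> (\<forall>j\<in>J. \<forall>k\<in>J. j \<noteq> k \<longrightarrow> T j \<inter> T k = {})
     \<Longrightarrow> (\<forall>j\<in>J. \<forall>x\<in>T j. real (card (T j)) - 1 < q x * real (card (T j)))
     \<Longrightarrow> (\<Sum>j\<in>J. card (T j)) \<le> p l - 1"
proof (induction l arbitrary: J)
  case 0 then show ?case by simp
next
  case (Suc l)
  have lL: "l < L" using Suc.prems by simp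
  have pge1: "\<And>l'. l' \<le> L \<Longrightarrow> 1 \<le> p l'"
  proof -
    fix l' assume "l' \<le> L"
    then show "1 \<le> p l'"
    proof (induction l')
      case 0 then show ?case using p0 by simp
    next
      case (Suc l') then show ?case using step[of l'] by simp
    qed
  qed
  have pl: "1 \<le> p l" using pge1 lL by simp
  note st = step[OF lL]
  define s where "s = p (Suc l) - p l"
  show ?case
  proof (cases "J = {}")
    case True then show ?thesis by simp
  next
    case False
    define m where "m = Min ((\<lambda>j. card (T j)) ` J)"
    have "m \<in> (\<lambda>j. card (T j)) ` J"
      using Min_in[of "(\<lambda>j. card (T j)) ` J"] Suc.prems(2) False unfolding m_def by blast
    then obtain j0 where j0: "j0 \<in> J" "card (T j0) = m" by auto
    have mle: "\<And>j. j \<in> J \<Longrightarrow> m \<le> card (T j)" unfolding m_def using Suc.prems(2) by simp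
    show ?thesis
    proof (cases "s + 1 \<le> m")
      case True
      have sub: "(\<Union>j\<in>J. T j) \<subseteq> {1..p (Suc l) - 1}"
      proof
        fix x assume "x \<in> (\<Union>j\<in>J. T j)"
        then obtain j where j: "j \<in> J" "x \<in> T j" by auto
        have xn: "x \<in> {1..n}" using j Suc.prems(4) by blast
        have k: "s + 1 \<le> card (T j)" using mle[OF j(1)] True by simp
        have tight: "real (card (T j)) - 1 < q x * real (card (T j))" using Suc.prems(6) j by auto
        have "x < p (Suc l)"
        proof (rule ccontr)
          assume "\<not> x < p (Suc l)"
          then have "p (Suc l) \<le> x" by simp
          moreover have "p (Suc l) \<in> {1..n}" using st pl by simp
          ultimately have qq: "q x \<le> q (p (Suc l))" using mono[of "p (Suc l)" x] xn by blast
          have a0: "q (p (Suc l)) * (real s + 1) < real s" using st unfolding s_def by blast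
          have "q x * (real s + 1) \<le> q (p (Suc l)) * (real s + 1)"
            by (rule mult_right_mono[OF qq]) simp
          with a0 have a: "q x * (real s + 1) < real s" by linarith
          define k where "k = real (card (T j))"
          have kk: "real s + 1 \<le> k" using k unfolding k_def by simp
          have b: "k - 1 < q x * k" using tight unfolding k_def .
          have pos: "0 < 1 - q x"
          proof (rule ccontr)
            assume "\<not> 0 < 1 - q x"
            then have "1 \<le> q x" by simp
            then have "1 * (real s + 1) \<le> q x * (real s + 1)" by (rule mult_right_mono) simp
            from order_le_less_trans[OF this a] have "1 * (real s + 1) < real s" .
            then show False by simp
          qed
          have "(1 - q x) * (real s + 1) \<le> (1 - q x) * k" using kk pos by simp
          then show False using a b by (simp add: algebra_simps)
        qed
        then show "x \<in> {1..p (Suc l) - 1}" using xn by auto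
      qed
      have fin: "\<forall>j\<in>J. finite (T j)" using Suc.prems(4) finite_subset[of _ "{1..n}"] by blast
      have "(\<Sum>j\<in>J. card (T j)) = card (\<Union>j\<in>J. T j)"
        using card_UN_disjoint[of J T, OF Suc.prems(2) fin Suc.prems(5)] by simp
      also have "\<dots> \<le> card {1..p (Suc l) - 1}" using sub by (intro card_mono) auto
      finally show ?thesis by simp
    next
      case False
      have "(\<Sum>j\<in>J. card (T j)) = card (T j0) + (\<Sum>j\<in>J - {j0}. card (T j))"
        using sum.remove[OF Suc.prems(2) j0(1)] by simp
      also have "(\<Sum>j\<in>J - {j0}. card (T j)) \<le> p l - 1"
      proof (rule Suc.IH)
        show "l \<le> L" using lL by simp
        show "finite (J - {j0})" using Suc.prems(2) by simp
        show "card (J - {j0}) \<le> l" using Suc.prems(3) j0(1) Suc.prems(2) by (simp add: card_Diff_singleton)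
        show "\<forall>j\<in>J - {j0}. T j \<subseteq> {1..n}" using Suc.prems(4) by blast
        show "\<forall>j\<in>J - {j0}. \<forall>k\<in>J - {j0}. j \<noteq> k \<longrightarrow> T j \<inter> T k = {}" using Suc.prems(5) by blast
        show "\<forall>j\<in>J - {j0}. \<forall>x\<in>T j. real (card (T j)) - 1 < q x * real (card (T j))"
          using Suc.prems(6) by blast
      qed
      finally show ?thesis using False j0(2) st pl unfolding s_def by linarith
    qed
  qed
qed

lemma welfare_upd:
  assumes "j < B"
  shows "welfare q B (T(j := A)) = welfare q B T + (test_util q A - test_util q (T j))"
proof -
  have f: "finite {..<B}" by simp
  have j: "j \<in> {..<B}" using assms by simp
  have e1: "(\<Sum>i\<in>{..<B}. test_util q ((T(j:=A)) i)) = test_util q ((T(j:=A)) j) + (\<Sum>i\<in>{..<B}-{j}. test_util q ((T(j:=A)) i))"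
    by (rule sum.remove[OF f j])
  have e2: "(\<Sum>i\<in>{..<B}-{j}. test_util q ((T(j:=A)) i)) = (\<Sum>i\<in>{..<B}-{j}. test_util q (T i))"
    by (rule sum.cong) auto
  have e3: "(\<Sum>i\<in>{..<B}. test_util q (T i)) = test_util q (T j) + (\<Sum>i\<in>{..<B}-{j}. test_util q (T i))"
    by (rule sum.remove[OF f j])
  have e4: "(T(j:=A)) j = A" by simp
  show ?thesis unfolding welfare_def e1 e2 e3 e4 by simp
qed


lemma finite_regimes: "finite {T. regime n B T}"
proof -
  let ?f = "\<lambda>T. map T [0..<B]"
  have inj: "inj_on ?f {T. regime n B T}"
  proof (rule inj_onI)
    fix T T' assume a1: "T \<in> {T. regime n B T}" and a2: "T' \<in> {T. regime n B T}" and eq: "?f T = ?f T'"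
    from a1 have r1: "regime n B T" by simp
    from a2 have r2: "regime n B T'" by simp
    have lt: "\<forall>j\<in>set [0..<B]. T j = T' j" using eq by (simp only: map_eq_conv)
    show "T = T'"
    proof
      fix j
      show "T j = T' j"
      proof (cases "j < B")
        case True then show ?thesis using lt by simp
      next
        case False 
        then have "T j = {}" "T' j = {}" using r1 r2 unfolding regime_def by simp_all
        then show ?thesis by simp
      qed
    qed
  qed
  have "?f ` {T. regime n B T} \<subseteq> {xs. set xs \<subseteq> Pow {1..n} \<and> length xs = B}"
  proof
    fix xs assume "xs \<in> ?f ` {T. regime n B T}"
    then obtain T where r: "regime n B T" and xs: "xs = ?f T" by blast
    have "\<forall>j<B. T j \<subseteq> {1..n}" using r unfolding regime_def by simp
    then have "set xs \<subseteq> Pow {1..n}" unfolding xs by auto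
    moreover have "length xs = B" unfolding xs by simp
    ultimately show "xs \<in> {xs. set xs \<subseteq> Pow {1..n} \<and> length xs = B}" by simp
  qed
  moreover have "finite {xs. set xs \<subseteq> Pow {1..n} \<and> length xs = B}"
    by (rule finite_lists_length_eq) simp
  ultimately have "finite (?f ` {T. regime n B T})" by (rule finite_subset)
  then show ?thesis using inj by (rule finite_imageD)
qed


lemma prefix_set:
  assumes "finite S" "S \<subseteq> {1..}" "\<And>y x. y \<in> S \<Longrightarrow> 1 \<le> x \<Longrightarrow> x \<le> y \<Longrightarrow> x \<in> S"
  shows "S = {1..card (S::nat set)}"
proof (cases "S = {}")
  case True then show ?thesis by simp
next
  case False
  define M where "M = Max S"
  have M: "M \<in> S" "\<And>x. x \<in> S \<Longrightarrow> x \<le> M" using assms(1) False unfolding M_def by auto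
  have "S = {1..M}"
  proof
    show "S \<subseteq> {1..M}" using M assms(2) by auto
    show "{1..M} \<subseteq> S" using assms(3)[OF M(1)] by auto
  qed
  then show ?thesis by simp
qed




declare gpos.simps(2)[simp del]

lemma regime_upd:
  assumes "regime n B T" "j < B" "A \<subseteq> {1..n}" "\<forall>i<B. i \<noteq> j \<longrightarrow> A \<inter> T i = {}"
  shows "regime n B (T(j := A))"
  using assms unfolding regime_def by (auto simp: Int_commute)

theorem mainTheorem12:
  fixes q :: "nat \<Rightarrow> real" and n B n' :: nat
  assumes "\<And>i. i \<in> {1..n} \<Longrightarrow> 0 \<le> q i \<and> q i \<le> 1"
    and "\<And>i j. i \<in> {1..n} \<Longrightarrow> j \<in> {1..n} \<Longrightarrow> i \<le> j \<Longrightarrow> q j \<le> q i"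
    and "(\<Union>j<B. var_greedy q n B j) = {1..n'}"
  shows "\<exists>T n''. regime n B T \<and> (\<forall>T'. regime n B T' \<longrightarrow> welfare q B T' \<le> welfare q B T)
           \<and> (\<Union>j<B. T j) = {1..n''} \<and> n'' \<le> n'"
proof -
  define p where "p = gpos q n"
  have pmono: "\<And>l. p l \<le> p (Suc l)" using gpos_block by (simp add: p_def)
  have p0: "p 0 = 1" by (simp add: p_def)
  have pge: "\<And>l. 1 \<le> p l" using lift_Suc_mono_le[of p, OF pmono, of 0] p0 by auto
  have "(\<Union>j<B. var_greedy q n B j) = (\<Union>j<B. {p j..<p (Suc j)})"
    by (rule SUP_cong) (auto simp: vg_eq p_def)
  also have "\<dots> = {1..<p B}" using union_blocks[of p B, OF pmono] p0 by simp
  finally have "{1..n'} = {1..<p B}" using assms(3) by simp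
  then have n'_eq: "n' = p B - 1" by (metis card_atLeastAtMost card_atLeastLessThan diff_Suc_1)
  have Pnn: "\<And>A. A \<subseteq> {1..n} \<Longrightarrow> 0 \<le> (\<Prod>i\<in>A. q i)"
    by (rule prod_nonneg) (use assms(1) in blast)
  have rej: "q (p (Suc l)) * (real (p (Suc l) - p l) + 1) < real (p (Suc l) - p l)"
    if le: "p (Suc l) \<le> n" for l
  proof -
    let ?t = "{p l..<p (Suc l)}"
    let ?P = "\<Prod>i\<in>?t. q i"
    let ?c = "real (p (Suc l) - p l)"
    have lt: "test_util q (insert (p (Suc l)) ?t) < test_util q ?t"
      using gpos_block[of q n l] le by (simp add: p_def)
    have P: "0 \<le> ?P" using Pnn[of ?t] pge[of l] le by force
    have "?P * (q (p (Suc l)) * (?c + 1)) < ?P * ?c"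
      using lt unfolding test_util_def by (simp add: algebra_simps)
    then show ?thesis using P by (simp add: mult_less_cancel_left)
  qed
  define R where "R = {T. regime n B T}"
  have finR: "finite R" unfolding R_def by (rule finite_regimes)
  have emp: "(\<lambda>_. {}) \<in> R" unfolding regime_def R_def by simp
  have "Max (welfare q B ` R) \<in> welfare q B ` R" using finR emp by (intro Max_in) auto
  then obtain T0 where T0: "T0 \<in> R" "welfare q B T0 = Max (welfare q B ` R)" by auto
  define Opt where "Opt T \<longleftrightarrow> regime n B T \<and> (\<forall>T'. regime n B T' \<longrightarrow> welfare q B T' \<le> welfare q B T)"
    for T
  have "Opt T0" unfolding Opt_def using T0 finR R_def by auto
  define m where "m T = \<Sum>(\<Union>j<B. T j)" for T :: "nat \<Rightarrow> nat set"
  obtain T where T: "Opt T" and Tmin: "\<And>T'. Opt T' \<Longrightarrow> m T \<le> m T'"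
    using ex_has_least_nat[of Opt T0 m] \<open>Opt T0\<close> by blast
  define U where "U = (\<Union>j<B. T j)"
  have reg: "regime n B T" using T Opt_def by simp
  have Tsub: "\<And>j. j < B \<Longrightarrow> T j \<subseteq> {1..n}" using reg regime_def by simp
  have Tdisj: "\<And>i j. i < B \<Longrightarrow> j < B \<Longrightarrow> i \<noteq> j \<Longrightarrow> T i \<inter> T j = {}" using reg regime_def by simp
  have Usub: "U \<subseteq> {1..n}" using Tsub unfolding U_def by blast
  have Ufin: "finite U" using Usub finite_subset by blast
  have mT: "m T = \<Sum>U" unfolding m_def U_def by simp
  have tight: "\<forall>j<B. \<forall>x\<in>T j. real (card (T j)) - 1 < q x * real (card (T j))"
  proof (rule ccontr)
    assume "\<not> ?thesis"
    then obtain j x where j: "j < B" "x \<in> T j" and nt: "\<not> real (card (T j)) - 1 < q x * real (card (T j))"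
      by auto
    define A where "A = T j - {x}"
    have fA: "finite A" using Tsub[OF j(1)] finite_subset unfolding A_def by blast
    have TjA: "T j = insert x A" "x \<notin> A" using j unfolding A_def by auto
    have cT: "card (T j) = card A + 1" using TjA fA by simp
    have P: "0 \<le> (\<Prod>i\<in>A. q i)" using Pnn Tsub[OF j(1)] unfolding A_def by blast
    have nt': "q x * (real (card A) + 1) \<le> real (card A)" using nt cT by (simp add: algebra_simps not_less)
    have "test_util q (T j) \<le> test_util q A"
      unfolding test_util_def TjA(1) using TjA(2) fA P mult_left_mono[OF nt' P]
      by (simp add: algebra_simps)
    define T' where "T' = T(j := A)"
    have A1: "A \<subseteq> {1..n}" using Tsub[OF j(1)] unfolding A_def by blast
    have A2: "\<forall>i<B. i \<noteq> j \<longrightarrow> A \<inter> T i = {}"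
    proof (intro allI impI)
      fix i assume "i < B" "i \<noteq> j"
      then have "T j \<inter> T i = {}" using Tdisj[of j i] j(1) by simp
      then show "A \<inter> T i = {}" unfolding A_def by blast
    qed
    have reg': "regime n B T'" unfolding T'_def by (rule regime_upd[OF reg j(1) A1 A2])
    have "welfare q B T \<le> welfare q B T'" unfolding T'_def using welfare_upd[OF j(1), of q T A]
      \<open>test_util q (T j) \<le> test_util q A\<close> by simp
    then have "Opt T'" using T reg' unfolding Opt_def by force
    have U': "(\<Union>i<B. T' i) = U - {x}"
      using Tdisj j unfolding T'_def U_def A_def by auto
    have xU: "x \<in> U" using j unfolding U_def by auto
    have x1: "1 \<le> x" using Tsub[OF j(1)] j(2) by auto
    have "m T = x + \<Sum>(U - {x})" using mT sum.remove[OF Ufin xU, of id] by simp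
    moreover have "m T' = \<Sum>(U - {x})" unfolding m_def U' by simp
    ultimately have "m T' < m T" using x1 by simp
    then show False using Tmin[OF \<open>Opt T'\<close>] by simp
  qed
  have prefix: "x \<in> U" if y: "y \<in> U" and x: "1 \<le> x" "x \<le> y" for x y
  proof (rule ccontr)
    assume xn: "x \<notin> U"
    then obtain j where j: "j < B" "y \<in> T j" using y unfolding U_def by auto
    have xy: "x < y" using x xn y by (metis le_neq_implies_less)
    have yn: "y \<in> {1..n}" using Tsub[OF j(1)] j(2) by blast
    have xn': "x \<in> {1..n}" using x yn by auto
    define D where "D = T j - {y}"
    have fD: "finite D" using Tsub[OF j(1)] finite_subset unfolding D_def by blast
    have TjD: "T j = insert y D" "y \<notin> D" using j unfolding D_def by auto
    have xD: "x \<notin> D" using xn j unfolding D_def U_def by auto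
    define A where "A = insert x D"
    have P: "0 \<le> (\<Prod>i\<in>D. q i)" using Pnn Tsub[OF j(1)] unfolding D_def by blast
    have qxy: "q y \<le> q x" using assms(2)[OF xn' yn] x by simp
    have "test_util q (T j) \<le> test_util q A"
      unfolding test_util_def TjD(1) A_def using TjD(2) xD fD
      by (simp add: mult_right_mono[OF mult_right_mono[OF qxy P]])
    define T' where "T' = T(j := A)"
    have Asub: "A \<subseteq> {1..n}" using Tsub[OF j(1)] xn' unfolding A_def D_def by blast
    have A2: "\<forall>i<B. i \<noteq> j \<longrightarrow> A \<inter> T i = {}"
    proof (intro allI impI)
      fix i assume i: "i < B" "i \<noteq> j"
      then have "T j \<inter> T i = {}" using Tdisj[of j i] j(1) by simp
      moreover have "x \<notin> T i" using xn i unfolding U_def by blast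
      ultimately show "A \<inter> T i = {}" unfolding A_def D_def by blast
    qed
    have reg': "regime n B T'" unfolding T'_def by (rule regime_upd[OF reg j(1) Asub A2])
    have "welfare q B T \<le> welfare q B T'" unfolding T'_def using welfare_upd[OF j(1), of q T A]
      \<open>test_util q (T j) \<le> test_util q A\<close> by simp
    then have "Opt T'" using T reg' unfolding Opt_def by force
    have U': "(\<Union>i<B. T' i) = insert x (U - {y})"
      using Tdisj j unfolding T'_def U_def A_def D_def by auto
    have "m T = y + \<Sum>(U - {y})" using mT sum.remove[OF Ufin y, of id] by simp
    moreover have "m T' = x + \<Sum>(U - {y})" unfolding m_def U' using Ufin xn by simp
    ultimately have "m T' < m T" using xy by simp
    then show False using Tmin[OF \<open>Opt T'\<close>] by simp
  qed
  have Usub1: "U \<subseteq> {1..}" using Usub by auto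
  have Ueq: "U = {1..card U}"
    by (rule prefix_set[OF Ufin Usub1]) (rule prefix; assumption)
  have cardU: "card U = (\<Sum>j\<in>{..<B}. card (T j))"
    unfolding U_def using Tsub Tdisj finite_subset[of _ "{1..n}"]
    by (intro card_UN_disjoint) auto
  have "card U \<le> n'"
  proof (cases "p B \<le> n")
    case True
    have st: "p l \<le> p (Suc l) \<and> p (Suc l) \<le> n \<and>
        q (p (Suc l)) * (real (p (Suc l) - p l) + 1) < real (p (Suc l) - p l)" if "l < B" for l
    proof -
      have "p (Suc l) \<le> p B" using lift_Suc_mono_le[of p, OF pmono] that by simp
      then show ?thesis using pmono rej True by auto
    qed
    have "(\<Sum>j\<in>{..<B}. card (T j)) \<le> p B - 1"
      using count_lemma[of n q p B B "{..<B}" T, OF assms(2) p0 st] Tsub Tdisj tight by auto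
    then show ?thesis using cardU n'_eq by simp
  next
    case False
    have "card U \<le> n" using card_mono[OF _ Usub] by simp
    then show ?thesis using False n'_eq by simp
  qed
  then show ?thesis using T Ueq unfolding Opt_def U_def by blast
qed

end
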